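(* Let $V$ be a set of monomials of degree $d$ in $K[x_1,\dots,x_n]$ and let $u=\gcd(V)$. Then for every $i=1,2,\dots,n$: (1) $\overline{M_i}\,\mathrm{D}_i(V)\subset MV\setminus x_iV$; (2) $|MV|\geq |\mathrm{K}_i(V)|^{<n-1>}+|\mathrm{D}_i(V)|^{<n-2>}$. Moreover, equality holds in (2) if and only if $\mathrm{K}_i(V)$ is a Gotzmann set of $K[x_1,\dots,x_n]$, $\frac{1}{u}\mathrm{D}_i(V)$ is a Gotzmann set of $K[x_1,\dots,x_{i-1},x_{i+1},\dots,x_n]$, and $x_i\mathrm{D}_i(V)\subset \overline{M_i}\,\mathrm{K}_i(V)$.
   Context: $K$ is a field and $R=K[x_1,\dots,x_n]$ with all $\deg x_i=1$. $M=\{x_1,\dots,x_n\}$, $M^d$ is the set of monomials of degree $d$ ($M^0=\{1\}$), and $\overline{M_i}=M\setminus\{x_i\}$. For a monomial $w$ and a set $V$ of monomials of degree $d$, $wV=\{wv: v\in V\}$, $MV=\{x_jv: v\in V, 1\le j\le n\}$, $\overline{M_i}V=\{x_jv: v\in V, j\neq i\}$; $|V|$ is the cardinality and $\gcd(V)$ the greatest common divisor of the monomials in $V$; $\frac1u W=\{w/u: w\in W\}$. For positive integers $m,h$, the $m$th binomial representation is the unique expression $h=\sum_{j=i}^{m}{h(j)+j\choose j}$ with $h(m)\ge\dots\ge h(i)\ge0$, $i\ge1$, and $h^{<m>}=\sum_{j=i}^m{h(j)+j+1\choose j}$; conventions: $0^{<m>}=0$ for all $m$, and $1^{<0>}=1$.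 A set $W$ of monomials of the same degree in a polynomial ring $K[y_1,\dots,y_m]$ (with variable set $N=\{y_1,\dots,y_m\}$) is a Gotzmann set of that ring if $|NW|=|W|^{<m-1>}$. With $u=\gcd(V)$: if $|V|>1$, $\mathrm{K}_i(V)=\{v\in V: x_iu \text{ divides } v\}$ and $\mathrm{D}_i(V)=V\setminus \mathrm{K}_i(V)$; if $|V|=1$, $\mathrm{K}_i(V)=V$ and $\mathrm{D}_i(V)=\emptyset$. *)

theory Defs
  imports Main
begin

text \<open>Monomials in the variables x_1,...,x_n are represented by their exponent
  vectors, functions nat => nat; the coefficient field K plays no role.\<close>

type_synonym monomial = "nat \<Rightarrow> nat"

definition var :: "nat \<Rightarrow> monomial" where
  "var j = (\<lambda>k. if k = j then 1 else 0)"

definition mmul :: "monomial \<Rightarrow> monomial \<Rightarrow> monomial" where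
  "mmul a b = (\<lambda>k. a k + b k)"

definition mdvd :: "monomial \<Rightarrow> monomial \<Rightarrow> bool" where
  "mdvd a b \<longleftrightarrow> (\<forall>k. a k \<le> b k)"

definition monos_in :: "nat set \<Rightarrow> nat \<Rightarrow> monomial set" where
  "monos_in N d = {m. (\<forall>k. m k \<noteq> 0 \<longrightarrow> k \<in> N) \<and> (\<Sum>k\<in>N. m k) = d}"

definition mscale :: "monomial \<Rightarrow> monomial set \<Rightarrow> monomial set" where
  "mscale w V = {mmul w v | v. v \<in> V}"

text \<open>N V = {x_j v : v in V, j in N}; MV is mul_vars {1..n} V,
  and the bar-M_i V is mul_vars ({1..n} - {i}) V.\<close>
definition mul_vars :: "nat set \<Rightarrow> monomial set \<Rightarrow> monomial set" where
  "mul_vars N V = {mmul (var j) v | j v. j \<in> N \<and> v \<in> V}"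

definition mdiv :: "monomial \<Rightarrow> monomial set \<Rightarrow> monomial set" where
  "mdiv u W = {(\<lambda>k. w k - u k) | w. w \<in> W}"

definition mgcd :: "monomial set \<Rightarrow> monomial" where
  "mgcd V = (\<lambda>k. Min ((\<lambda>v. v k) ` V))"

definition Kset :: "nat \<Rightarrow> monomial set \<Rightarrow> monomial set" where
  "Kset i V = (if card V > 1 then {v \<in> V. mdvd (mmul (var i) (mgcd V)) v} else V)"

definition Dset :: "nat \<Rightarrow> monomial set \<Rightarrow> monomial set" where
  "Dset i V = (if card V > 1 then V - Kset i V else {})"

definition binom_rep :: "nat \<Rightarrow> nat \<Rightarrow> (nat \<Rightarrow> nat) \<Rightarrow> nat \<Rightarrow> bool" where
  "binom_rep m h a i \<longleftrightarrow> 1 \<le> i \<and> i \<le> m \<and>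
     (\<forall>j k. i \<le> j \<longrightarrow> j \<le> k \<longrightarrow> k \<le> m \<longrightarrow> a j \<le> a k) \<and>
     h = (\<Sum>j=i..m. (a j + j) choose j)"

text \<open>h^{<m>}; conventions 0^{<m>} = 0 and 1^{<0>} = 1 (for m = 0 we set h^{<0>} = h,
  only h \<le> 1 being relevant).\<close>
definition bin_up :: "nat \<Rightarrow> nat \<Rightarrow> nat" where
  "bin_up m h = (if h = 0 then 0 else if m = 0 then h else
     (THE s. \<exists>a i. binom_rep m h a i \<and> s = (\<Sum>j=i..m. (a j + j + 1) choose j)))"

definition gotzmann :: "nat set \<Rightarrow> monomial set \<Rightarrow> bool" where
  "gotzmann N W \<longleftrightarrow> (\<exists>d. W \<subseteq> monos_in N d) \<and>
     card (mul_vars N W) = bin_up (card N - 1) (card W)"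

end

theory Submission
  imports Defs "HOL-Library.FuncSet"
begin


definition mk :: "nat \<Rightarrow> nat \<Rightarrow> nat" where
  "mk m h = (LEAST k. h < Suc k choose m)"

fun mf :: "nat \<Rightarrow> nat \<Rightarrow> nat" where
  "mf 0 h = h"
| "mf (Suc m) h = (if h = 0 then 0 else
     (Suc (mk (Suc m) h) choose Suc m) + mf m (h - (mk (Suc m) h choose Suc m)))"

declare binomial_Suc_Suc[simp del]

lemma mf_0 [simp]: "mf m 0 = 0"
  by (cases m) auto

lemma choose_ge_s: "0 < m \<Longrightarrow> Suc s \<le> (s + m) choose m"
proof (induction s)
  case 0 then show ?case by simp
next
  case (Suc s)
  obtain m' where m: "m = Suc m'" using Suc.prems by (cases m) auto
  have "(Suc s + m) choose m = ((s + m) choose m') + ((s + m) choose m)"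
    using m by (simp add: binomial_Suc_Suc)
  moreover have "0 < (s + m) choose m'" using m by (intro zero_less_binomial) simp
  ultimately show ?case using Suc.IH[OF Suc.prems] by linarith
qed

lemma mk_props:
  assumes "0 < m" "0 < h"
  shows "m \<le> mk m h \<and> (mk m h choose m) \<le> h \<and> h < Suc (mk m h) choose m"
proof -
  let ?P = "\<lambda>k. h < Suc k choose m"
  have ex: "?P (h + m)" using choose_ge_s[OF assms(1), of "Suc h"] by simp
  have P: "?P (mk m h)" unfolding mk_def by (rule LeastI[of ?P, OF ex])
  have min: "\<And>y. ?P y \<Longrightarrow> mk m h \<le> y" unfolding mk_def by (rule Least_le)
  have ge: "m \<le> mk m h"
  proof (rule ccontr)
    assume "\<not> m \<le> mk m h"
    then have "Suc (mk m h) \<le> m" by simp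
    then have "Suc (mk m h) choose m \<le> 1"
      by (cases "Suc (mk m h) = m") (auto simp: binomial_eq_0)
    with P assms show False by simp
  qed
  have le: "(mk m h choose m) \<le> h"
  proof (rule ccontr)
    assume "\<not> (mk m h choose m) \<le> h"
    then have "h < mk m h choose m" by simp
    moreover obtain k where k: "mk m h = Suc k" using ge assms(1) by (cases "mk m h") auto
    ultimately have "?P k" by simp
    with min have "mk m h \<le> k" by blast
    with k show False by simp
  qed
  show ?thesis using ge le P by blast
qed

lemma mk_eq:
  assumes "0 < m" "m \<le> k" "(k choose m) \<le> h" "h < Suc k choose m"
  shows "mk m h = k"
  unfolding mk_def
proof (rule Least_equality)
  show "h < Suc k choose m" by fact
  fix y assume "h < Suc y choose m"
  show "k \<le> y"
  proof (rule ccontr)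
    assume "\<not> k \<le> y"
    then have "Suc y \<le> k" by simp
    then have "Suc y choose m \<le> k choose m" by (rule binomial_right_mono)
    with assms \<open>h < Suc y choose m\<close> show False by simp
  qed
qed

lemma mf_eq:
  assumes "0 < m" "m \<le> k" "x < k choose (m - 1)"
  shows "mf m ((k choose m) + x) = (Suc k choose m) + mf (m - 1) x"
proof -
  obtain m' where m: "m = Suc m'" using assms(1) by (cases m) auto
  have pos: "0 < k choose m" using assms by (intro zero_less_binomial) simp
  have "mk m ((k choose m) + x) = k"
    using assms m by (intro mk_eq) (auto simp: binomial_Suc_Suc)
  then show ?thesis using pos m by simp
qed

declare mf.simps(2)[simp del]

lemma mf_decomp:
  assumes "0 < m" "0 < h"
  shows "\<exists>k x. m \<le> k \<and> x < k choose (m - 1) \<and> h = (k choose m) + x"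
proof -
  obtain m' where m: "m = Suc m'" using assms(1) by (cases m) auto
  let ?k = "mk m h"
  have p: "m \<le> ?k" "(?k choose m) \<le> h" "h < Suc ?k choose m" using mk_props[OF assms] by auto
  have "Suc ?k choose m = (?k choose (m - 1)) + (?k choose m)" using m by (simp add: binomial_Suc_Suc)
  then have "h - (?k choose m) < ?k choose (m - 1)" using p by linarith
  then show ?thesis using p by (intro exI[of _ ?k] exI[of _ "h - (?k choose m)"]) auto
qed

lemma mf_ge: "h \<le> mf m h"
proof (induction m arbitrary: h)
  case 0 then show ?case by simp
next
  case (Suc m)
  show ?case
  proof (cases "h = 0")
    case True then show ?thesis by simp
  next
    case False
    then obtain k x where kx: "Suc m \<le> k" "x < k choose m" "h = (k choose Suc m) + x"
      using mf_decomp[of "Suc m" h] by auto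
    have "mf (Suc m) h = (Suc k choose Suc m) + mf m x" using mf_eq[of "Suc m" k x] kx by simp
    moreover have "(k choose Suc m) \<le> (Suc k choose Suc m)" by (rule binomial_right_mono) simp
    moreover have "x \<le> mf m x" by (rule Suc.IH)
    ultimately show ?thesis using kx by simp
  qed
qed

lemma mf_binom: "m \<le> k \<Longrightarrow> mf m (k choose m) = Suc k choose m"
proof (cases m)
  case 0 then show ?thesis by simp
next
  case (Suc m')
  assume "m \<le> k"
  have "0 < k choose m'" using \<open>m \<le> k\<close> Suc by (intro zero_less_binomial) simp
  then show ?thesis using mf_eq[of m k 0] \<open>m \<le> k\<close> Suc by simp
qed

lemma mf1: "0 < h \<Longrightarrow> mf 1 h = Suc h"
  using mf_binom[of 1 h] by simp

lemma mf_mono_all: "mono (mf m)"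
proof (induction m)
  case 0 then show ?case by (simp add: mono_def)
next
  case (Suc m)
  have step: "mf (Suc m) h \<le> mf (Suc m) (Suc h)" for h
  proof (cases "h = 0")
    case True then show ?thesis by simp
  next
    case False
    then obtain k x where kx: "Suc m \<le> k" "x < k choose m" "h = (k choose Suc m) + x"
      using mf_decomp[of "Suc m" h] by auto
    have e1: "mf (Suc m) h = (Suc k choose Suc m) + mf m x" using mf_eq[of "Suc m" k x] kx by simp
    show ?thesis
    proof (cases "Suc x < k choose m")
      case True
      have "Suc h = (k choose Suc m) + Suc x" using kx by simp
      then have "mf (Suc m) (Suc h) = (Suc k choose Suc m) + mf m (Suc x)"
        using mf_eq[of "Suc m" k "Suc x"] kx True by simp
      moreover have "mf m x \<le> mf m (Suc x)" using Suc.IH by (simp add: mono_def)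
      ultimately show ?thesis using e1 by simp
    next
      case False
      then have sx: "Suc x = k choose m" using kx by simp
      then have "Suc h = Suc k choose Suc m" using kx by (simp add: binomial_Suc_Suc)
      then have "mf (Suc m) (Suc h) = Suc (Suc k) choose Suc m" using mf_binom[of "Suc m" "Suc k"] kx by simp
      moreover have "mf m x \<le> mf m (k choose m)" using Suc.IH sx by (simp add: mono_def)
      moreover have "mf m (k choose m) = Suc k choose m" using kx by (intro mf_binom) simp
      ultimately show ?thesis using e1 by (simp add: binomial_Suc_Suc[of "Suc k"])
    qed
  qed
  show ?case by (rule mono_iff_le_Suc[THEN iffD2]) (use step in blast)
qed

lemma mf_mono: "h \<le> h' \<Longrightarrow> mf m h \<le> mf m h'"
  using mf_mono_all[of m] by (simp add: mono_def)

definition SA :: "nat \<Rightarrow> bool" where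
  "SA j \<longleftrightarrow> (\<forall>x y. mf j (x + y) \<le> mf j x + mf j y)"

lemma SA_0: "SA 0" by (simp add: SA_def)

lemma mf_S:
  assumes "0 < m" "SA (m - 1)" "m \<le> k"
  shows "(Suc k choose m) + mf (m - 1) x \<le> mf m ((k choose m) + x)"
  using assms(3)
proof (induction x arbitrary: k rule: less_induct)
  case (less x)
  obtain m' where m: "m = Suc m'" using assms(1) by (cases m) auto
  show ?case
  proof (cases "x < k choose (m - 1)")
    case True
    then show ?thesis using mf_eq[of m k x] assms less.prems by simp
  next
    case False
    define x1 where "x1 = x - (k choose m')"
    have pos: "0 < k choose m'" using less.prems m by (intro zero_less_binomial) simp
    have x: "x = (k choose m') + x1" using False m x1_def by simp
    have lt: "x1 < x" using x pos by simp
    have IH: "(Suc (Suc k) choose m) + mf m' x1 \<le> mf m ((Suc k choose m) + x1)"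
      using less.IH[OF lt, of "Suc k"] less.prems m by simp
    have sa: "mf m' x \<le> mf m' (k choose m') + mf m' x1"
      using assms(2) m x by (simp add: SA_def)
    have b: "mf m' (k choose m') = Suc k choose m'" using less.prems m by (intro mf_binom) simp
    have eq: "(k choose m) + x = (Suc k choose m) + x1" using x m by (simp add: binomial_Suc_Suc)
    have p2: "Suc (Suc k) choose m = (Suc k choose m') + (Suc k choose m)" using m by (simp add: binomial_Suc_Suc)
    have eq2: "mf m ((k choose m) + x) = mf m ((Suc k choose m) + x1)" using eq by simp
    show ?thesis using IH sa b eq2 p2 m by simp
  qed
qed

lemma mf_L:
  assumes "0 < m" "\<forall>j. j + 2 \<le> m \<longrightarrow> SA j" "mf m b \<le> a + b"
  shows "mf m (a + b) \<le> mf (m - 1) a + a + b"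
  using assms
proof (induction m arbitrary: a b)
  case 0 then show ?case by simp
next
  case (Suc m')
  show ?case
  proof (cases m')
    case 0
    show ?thesis
    proof (cases "a + b = 0")
      case True then show ?thesis by simp
    next
      case False
      have "0 < a"
      proof (cases "b = 0")
        case True then show ?thesis using False by simp
      next
        case False
        then have "mf 1 b = Suc b" by (intro mf1) simp
        then show ?thesis using Suc.prems 0 by simp
      qed
      then show ?thesis using mf1[of "a + b"] False 0 by simp
    qed
  next
    case (Suc m'')
    let ?m = "Suc m'"
    have m'pos: "0 < m'" using Suc by simp
    have m''eq: "m' - 1 = m''" using Suc by simp
    have SAm'': "SA m''" using Suc.prems(2) Suc by auto
    have SAall: "\<forall>j. j + 2 \<le> m' \<longrightarrow> SA j" using Suc.prems(2) by auto
    have Lm': "mf m' (a' + b') \<le> mf m'' a' + a' + b'" if "mf m' b' \<le> a' + b'" for a' b'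
      using Suc.IH[OF m'pos SAall that] m''eq by simp
    have Sm': "(Suc k choose m') + mf m'' x \<le> mf m' ((k choose m') + x)" if "m' \<le> k" for k x
      using mf_S[OF m'pos _ that, of x] SAm'' m''eq by simp
    define h where "h = a + b"
    let ?P = "\<lambda>\<beta>. mf ?m \<beta> \<le> h"
    have Pb: "?P b" using Suc.prems h_def by simp
    have bnd: "y \<le> h" if "?P y" for y using mf_ge[of y ?m] that by linarith
    define \<beta> where "\<beta> = (GREATEST \<beta>. ?P \<beta>)"
    have Pbeta: "?P \<beta>" unfolding \<beta>_def by (rule GreatestI_nat[of ?P, OF Pb bnd])
    have bge: "y \<le> \<beta>" if "?P y" for y unfolding \<beta>_def by (rule Greatest_le_nat[of ?P, OF that bnd])
    have "b \<le> \<beta>" using bge Pb by blast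
    show ?thesis
    proof (cases "\<beta> = 0")
      case True
      then have b0: "b = 0" using \<open>b \<le> \<beta>\<close> by simp
      have mf1': "mf ?m 1 = Suc ?m" using mf_binom[of ?m ?m] by simp
      have "\<not> ?P 1" using bge True by fastforce
      then have hle: "h \<le> ?m" using mf1' by simp
      show ?thesis
      proof (cases "h = 0")
        case True then show ?thesis using h_def by simp
      next
        case False
        have e: "mf ?m h = (Suc ?m choose ?m) + mf m' (h - 1)"
          using mf_eq[of ?m ?m "h - 1"] hle False by simp
        have s: "(Suc m' choose m') + mf m'' (h - 1) \<le> mf m' ((m' choose m') + (h - 1))"
          using Sm'[of m' "h - 1"] by simp
        have l: "mf m' (h - 1) \<le> mf m'' (h - 1) + (h - 1) + 0"
          using Lm'[of 0 "h - 1"] by simp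
        show ?thesis using e s l b0 h_def False Suc by simp
      qed
    next
      case False
      then obtain k r where kr: "?m \<le> k" "r < k choose m'" "\<beta> = (k choose ?m) + r"
        using mf_decomp[of ?m \<beta>] by auto
      have mb: "mf ?m \<beta> = (Suc k choose ?m) + mf m' r" using mf_eq[of ?m k r] kr by simp
      define y where "y = h - (Suc k choose ?m)"
      have y1: "mf m' r \<le> y" using mb Pbeta y_def by simp
      have ry: "r \<le> y" using y1 mf_ge[of r m'] by simp
      have hy: "h = (Suc k choose ?m) + y" using mb Pbeta y_def by simp
      have p1: "Suc k choose ?m = (k choose m') + (k choose ?m)" by (simp add: binomial_Suc_Suc)
      have p2: "Suc (Suc k) choose ?m = (Suc k choose m') + (Suc k choose ?m)" by (simp add: binomial_Suc_Suc)
      have ylt: "y < Suc k choose m'"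
      proof (rule ccontr)
        assume "\<not> y < Suc k choose m'"
        then have "Suc (Suc k) choose ?m \<le> h" using hy p2 by simp
        moreover have "mf ?m (Suc k choose ?m) = Suc (Suc k) choose ?m"
          using kr by (intro mf_binom) simp
        ultimately have "?P (Suc k choose ?m)" by simp
        then have "(Suc k choose ?m) \<le> \<beta>" by (rule bge)
        then show False using kr p1 by simp
      qed
      have mh: "mf ?m h = (Suc (Suc k) choose ?m) + mf m' y"
        using mf_eq[of ?m "Suc k" y] kr ylt hy by simp
      define a1 where "a1 = (k choose m') + (y - r)"
      have a1h: "a1 = h - \<beta>" using a1_def hy kr p1 ry by simp
      have a1a: "a1 \<le> a" using a1h h_def \<open>b \<le> \<beta>\<close> by simp
      have s: "(Suc k choose m') + mf m'' (y - r) \<le> mf m' a1"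
        using Sm'[of k "y - r"] kr a1_def by simp
      have l: "mf m' y \<le> mf m'' (y - r) + (y - r) + r"
        using Lm'[of r "y - r"] y1 ry by simp
      have mo: "mf m' a1 \<le> mf m' a" using a1a by (rule mf_mono)
      show ?thesis using mh s l mo p2 hy ry h_def by simp
    qed
  qed
qed

lemma sum_choose_1n: "(\<Sum>j=1..n. (c + j) choose j) + 1 = Suc (c + n) choose n"
proof (induction n)
  case 0 then show ?case by simp
next
  case (Suc n)
  have "(\<Sum>j=1..Suc n. (c + j) choose j) = (\<Sum>j=1..n. (c + j) choose j) + ((c + Suc n) choose Suc n)"
    by simp
  moreover have "Suc (c + Suc n) choose Suc n = (Suc (c + n) choose n) + (Suc (c + n) choose Suc n)"
    by (simp add: binomial_Suc_Suc)
  ultimately show ?case using Suc by simp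
qed

lemma rep_val:
  assumes "binom_rep m h a i"
  shows "(\<Sum>j=i..m. (a j + j + 1) choose j) = mf m h"
  using assms
proof (induction m arbitrary: h)
  case 0 then show ?case by (simp add: binom_rep_def)
next
  case (Suc m')
  let ?m = "Suc m'"
  have R: "1 \<le> i" "i \<le> ?m" "\<And>j k. i \<le> j \<Longrightarrow> j \<le> k \<Longrightarrow> k \<le> ?m \<Longrightarrow> a j \<le> a k"
     "h = (\<Sum>j=i..?m. (a j + j) choose j)"
    using Suc.prems unfolding binom_rep_def by auto
  define k where "k = a ?m + ?m"
  define r where "r = (\<Sum>j=i..m'. (a j + j) choose j)"
  have hs: "h = (k choose ?m) + r" using R(2,4) unfolding r_def k_def by (simp add: sum.cl_ivl_Suc)
  have "r \<le> (\<Sum>j=1..m'. (a ?m + j) choose j)"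
  proof -
    have "r \<le> (\<Sum>j=i..m'. (a ?m + j) choose j)"
      unfolding r_def by (intro sum_mono binomial_right_mono) (use R(3) in auto)
    also have "\<dots> \<le> (\<Sum>j=1..m'. (a ?m + j) choose j)"
      using R(1) by (intro sum_mono2) auto
    finally show ?thesis .
  qed
  moreover have "(\<Sum>j=1..m'. (a ?m + j) choose j) + 1 = k choose m'"
    using sum_choose_1n[of "a ?m" m'] unfolding k_def by simp
  ultimately have rlt: "r < k choose (?m - 1)" by simp
  have mfh: "mf ?m h = (Suc k choose ?m) + mf m' r"
    using mf_eq[of ?m k r] rlt hs unfolding k_def by simp
  show ?case
  proof (cases "i = ?m")
    case True
    then have "r = 0" unfolding r_def by simp
    then show ?thesis using True mfh k_def by simp
  next
    case False
    then have im: "i \<le> m'" using R(2) by simp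
    have "binom_rep m' r a i" unfolding binom_rep_def r_def using R im by auto
    then have "(\<Sum>j=i..m'. (a j + j + 1) choose j) = mf m' r" by (rule Suc.IH)
    then show ?thesis using mfh im k_def by (simp add: sum.cl_ivl_Suc)
  qed
qed

lemma rep_ex: "0 < m \<Longrightarrow> 0 < h \<Longrightarrow> \<exists>a i. binom_rep m h a i"
proof (induction m arbitrary: h)
  case 0 then show ?case by simp
next
  case (Suc m')
  let ?m = "Suc m'"
  obtain k x where kx: "?m \<le> k" "x < k choose m'" "h = (k choose ?m) + x"
    using mf_decomp[of ?m h] Suc.prems by auto
  show ?case
  proof (cases "x = 0")
    case True
    have "binom_rep ?m h (\<lambda>_. k - ?m) ?m" unfolding binom_rep_def using kx True by simp
    then show ?thesis by blast
  next
    case False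
    have "0 < m'"
    proof (rule ccontr)
      assume "\<not> 0 < m'" then have "m' = 0" by simp
      then show False using kx False by simp
    qed
    then obtain a' i' where r: "binom_rep m' x a' i'" using Suc.IH[of x] False by blast
    have R: "1 \<le> i'" "i' \<le> m'" "\<And>j k. i' \<le> j \<Longrightarrow> j \<le> k \<Longrightarrow> k \<le> m' \<Longrightarrow> a' j \<le> a' k"
       "x = (\<Sum>j=i'..m'. (a' j + j) choose j)"
      using r unfolding binom_rep_def by auto
    have "((a' m' + m') choose m') \<le> x"
      unfolding R(4) using R(2) by (intro member_le_sum) auto
    then have "a' m' + m' < k"
      using kx(2) binomial_right_mono[of k "a' m' + m'" m'] by (cases "k \<le> a' m' + m'") auto
    then have am: "a' m' \<le> k - ?m" by simp
    define a where "a = a'(?m := k - ?m)"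
    have "binom_rep ?m h a i'"
      unfolding binom_rep_def
    proof (intro conjI allI impI)
      show "1 \<le> i'" "i' \<le> ?m" using R by auto
      fix j l assume jl: "i' \<le> j" "j \<le> l" "l \<le> ?m"
      show "a j \<le> a l"
      proof (cases "l = ?m")
        case True
        then show ?thesis
        proof (cases "j = ?m")
          case False
          then have "a' j \<le> a' m'" using jl True by (intro R(3)) auto
          then show ?thesis using True False am a_def by simp
        qed (simp add: a_def)
      next
        case False
        then show ?thesis using jl R(3)[of j l] a_def by simp
      qed
    next
      have "(\<Sum>j=i'..?m. (a j + j) choose j) = (\<Sum>j=i'..m'. (a j + j) choose j) + (k choose ?m)"
        using R(2) kx(1) a_def by (simp add: sum.cl_ivl_Suc)
      also have "(\<Sum>j=i'..m'. (a j + j) choose j) = x"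
        unfolding R(4) a_def by (intro sum.cong) auto
      finally show "h = (\<Sum>j=i'..?m. (a j + j) choose j)" using kx by simp
    qed
    then show ?thesis by blast
  qed
qed

lemma bin_up_mf: "bin_up m h = mf m h"
proof -
  consider "h = 0" | "m = 0" | "0 < h" "0 < m" by auto
  then show ?thesis
  proof cases
    case 3
    obtain a i where r: "binom_rep m h a i" using rep_ex 3 by blast
    have "(THE s. \<exists>a i. binom_rep m h a i \<and> s = (\<Sum>j=i..m. (a j + j + 1) choose j)) = mf m h"
    proof (rule the_equality)
      show "\<exists>a i. binom_rep m h a i \<and> mf m h = (\<Sum>j=i..m. (a j + j + 1) choose j)"
        using r rep_val[OF r] by metis
      fix s assume "\<exists>a i. binom_rep m h a i \<and> s = (\<Sum>j=i..m. (a j + j + 1) choose j)"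
      then show "s = mf m h" using rep_val by auto
    qed
    then show ?thesis using 3 unfolding bin_up_def by simp
  qed (auto simp: bin_up_def)
qed




definition inc :: "nat \<Rightarrow> monomial \<Rightarrow> monomial" where
  "inc j w = w(j := Suc (w j))"
definition dec :: "nat \<Rightarrow> monomial \<Rightarrow> monomial" where
  "dec j w = w(j := w j - 1)"

lemma inc_apply: "inc j w k = (if k = j then Suc (w k) else w k)"
  by (simp add: inc_def)
lemma dec_apply: "dec j w k = (if k = j then w k - 1 else w k)"
  by (simp add: dec_def)

lemma mmul_var: "mmul (var j) v = inc j v"
  by (auto simp: mmul_def var_def inc_def fun_eq_iff)

lemma mem_mul_vars: "y \<in> mul_vars N V \<longleftrightarrow> (\<exists>j\<in>N. \<exists>v\<in>V. y = inc j v)"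
  by (auto simp: mul_vars_def mmul_var)

lemma inc_dec: "0 < w t \<Longrightarrow> inc t (dec t w) = w"
  by (auto simp: inc_def dec_def fun_eq_iff)
lemma dec_inc [simp]: "dec t (inc t w) = w"
  by (auto simp: inc_def dec_def fun_eq_iff)
lemma inc_inj: "inc j v = inc j w \<longleftrightarrow> v = w"
  by (metis dec_inc)
lemma inc_comm: "inc j (inc k w) = inc k (inc j w)"
  by (auto simp: inc_def fun_eq_iff)

lemma monos_in_supp: "w \<in> monos_in N d \<Longrightarrow> k \<notin> N \<Longrightarrow> w k = 0"
  by (auto simp: monos_in_def)
lemma monos_in_sum: "w \<in> monos_in N d \<Longrightarrow> (\<Sum>k\<in>N. w k) = d"
  by (auto simp: monos_in_def)
lemma monos_in_le: "finite N \<Longrightarrow> w \<in> monos_in N d \<Longrightarrow> w k \<le> d"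
proof (cases "k \<in> N")
  case True
  assume "finite N" "w \<in> monos_in N d"
  then show ?thesis using True member_le_sum[of k N w] by (simp add: monos_in_def)
next
  case False
  assume "w \<in> monos_in N d"
  then show ?thesis using False by (simp add: monos_in_supp)
qed

lemma sum_inc: "finite N \<Longrightarrow> j \<in> N \<Longrightarrow> (\<Sum>k\<in>N. inc j w k) = Suc (\<Sum>k\<in>N. w k)"
proof -
  assume N: "finite N" "j \<in> N"
  have "(\<Sum>k\<in>N. inc j w k) = (\<Sum>k\<in>N. w k + (if k = j then 1 else 0))"
    by (intro sum.cong) (auto simp: inc_def)
  also have "\<dots> = (\<Sum>k\<in>N. w k) + 1" using N by (simp add: sum.distrib)
  finally show ?thesis by simp
qed

lemma inc_monos: "finite N \<Longrightarrow> j \<in> N \<Longrightarrow> w \<in> monos_in N d \<Longrightarrow> inc j w \<in> monos_in N (Suc d)"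
  using sum_inc[of N j w] by (auto simp: monos_in_def inc_def)

lemma dec_monos:
  assumes "finite N" "0 < w t" "w \<in> monos_in N d"
  shows "dec t w \<in> monos_in N (d - 1) \<and> 0 < d"
proof -
  have t: "t \<in> N" using assms by (auto simp: monos_in_def)
  have "(\<Sum>k\<in>N. inc t (dec t w) k) = Suc (\<Sum>k\<in>N. dec t w k)" using sum_inc[OF assms(1) t] .
  then have "Suc (\<Sum>k\<in>N. dec t w k) = d" using inc_dec[of w t, OF assms(2)] assms(3) by (simp add: monos_in_def)
  then show ?thesis using assms(3) by (auto simp: monos_in_def dec_def)
qed

lemma finite_monos: "finite N \<Longrightarrow> finite (monos_in N d)"
proof -
  assume N: "finite N"
  have "inj_on (\<lambda>w. restrict w N) (monos_in N d)"
  proof (rule inj_onI)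
    fix v w assume vw: "v \<in> monos_in N d" "w \<in> monos_in N d" "restrict v N = restrict w N"
    show "v = w"
    proof
      fix k show "v k = w k"
      proof (cases "k \<in> N")
        case True then show ?thesis using vw(3) by (metis restrict_apply')
      next
        case False then show ?thesis using vw(1,2) by (simp add: monos_in_supp)
      qed
    qed
  qed
  moreover have "(\<lambda>w. restrict w N) ` monos_in N d \<subseteq> PiE N (\<lambda>_. {0..d})"
    using monos_in_le[OF N] by (auto simp: PiE_def extensional_def)
  moreover have "finite (PiE N (\<lambda>_. {0..d}))" using N by (intro finite_PiE) auto
  ultimately show ?thesis by (meson finite_imageD finite_subset)
qed

lemma monos_in_mono:
  assumes "finite N" "N' \<subseteq> N"
  shows "monos_in N' d \<subseteq> monos_in N d"
proof
  fix w assume w: "w \<in> monos_in N' d"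
  have "(\<Sum>k\<in>N. w k) = (\<Sum>k\<in>N'. w k)"
    using assms w by (intro sum.mono_neutral_right) (auto simp: monos_in_def)
  then show "w \<in> monos_in N d" using w assms by (auto simp: monos_in_def)
qed

lemma monos_F0:
  assumes "finite N" "t \<in> N"
  shows "{w \<in> monos_in N d. w t = 0} = monos_in (N - {t}) d"
proof -
  have s: "(\<Sum>k\<in>N. w k) = w t + (\<Sum>k\<in>N - {t}. w k)" for w
    using assms by (simp add: sum.remove)
  show ?thesis
  proof (rule set_eqI)
    fix w
    show "w \<in> {w \<in> monos_in N d. w t = 0} \<longleftrightarrow> w \<in> monos_in (N - {t}) d"
    proof
      assume w: "w \<in> {w \<in> monos_in N d. w t = 0}"
      then show "w \<in> monos_in (N - {t}) d" using s[of w] by (auto simp: monos_in_def)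
    next
      assume w: "w \<in> monos_in (N - {t}) d"
      then have "w t = 0" by (auto simp: monos_in_def)
      then show "w \<in> {w \<in> monos_in N d. w t = 0}" using s[of w] w by (auto simp: monos_in_def)
    qed
  qed
qed

lemma finite_mul_vars: "finite N \<Longrightarrow> finite V \<Longrightarrow> finite (mul_vars N V)"
proof -
  assume "finite N" "finite V"
  have "mul_vars N V = (\<lambda>(j, v). inc j v) ` (N \<times> V)"
    unfolding mem_mul_vars set_eq_iff by force
  then show ?thesis using \<open>finite N\<close> \<open>finite V\<close> by simp
qed

lemma mul_vars_monos: "finite N \<Longrightarrow> V \<subseteq> monos_in N d \<Longrightarrow> mul_vars N V \<subseteq> monos_in N (Suc d)"
  by (auto simp: mem_mul_vars intro!: inc_monos)

lemma mul_vars_Un: "mul_vars N (A \<union> B) = mul_vars N A \<union> mul_vars N B"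
  unfolding set_eq_iff Un_iff mem_mul_vars by blast

lemma mul_vars_mono: "V \<subseteq> V' \<Longrightarrow> N \<subseteq> N' \<Longrightarrow> mul_vars N V \<subseteq> mul_vars N' V'"
  unfolding subset_iff mem_mul_vars by blast

lemma mul_vars_empty [simp]: "mul_vars N {} = {}" "mul_vars {} V = {}"
  by (auto simp: mem_mul_vars)

lemma mul_vars_insert: "mul_vars (insert s N) V = inc s ` V \<union> mul_vars N V"
  unfolding set_eq_iff Un_iff image_iff mem_mul_vars by blast

lemma mul_vars_all:
  assumes "finite N" "N \<noteq> {}"
  shows "mul_vars N (monos_in N e) = monos_in N (Suc e)"
proof
  show "mul_vars N (monos_in N e) \<subseteq> monos_in N (Suc e)" using assms by (intro mul_vars_monos) auto
  show "monos_in N (Suc e) \<subseteq> mul_vars N (monos_in N e)"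
  proof
    fix y assume y: "y \<in> monos_in N (Suc e)"
    have "\<exists>k\<in>N. 0 < y k"
    proof (rule ccontr)
      assume "\<not> (\<exists>k\<in>N. 0 < y k)"
      then have "(\<Sum>k\<in>N. y k) = 0" by simp
      then show False using y by (simp add: monos_in_def)
    qed
    then obtain k where k: "k \<in> N" "0 < y k" by blast
    have "dec k y \<in> monos_in N e" using dec_monos[OF assms(1) k(2) y] by simp
    then show "y \<in> mul_vars N (monos_in N e)" using k inc_dec[of y k, OF k(2)] unfolding mem_mul_vars by metis
  qed
qed

lemma mmul_inj: "mmul c a = mmul c b \<longleftrightarrow> a = b"
  by (auto simp: mmul_def fun_eq_iff)

lemma card_mmul: "card (mmul c ` A) = card A"
  by (rule card_image) (auto simp: inj_on_def mmul_inj)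

lemma inc_mmul: "inc j (mmul c a) = mmul c (inc j a)"
  by (auto simp: inc_def mmul_def fun_eq_iff)

lemma mul_vars_img: "mul_vars N V = (\<lambda>(j, v). inc j v) ` (N \<times> V)"
  unfolding set_eq_iff mem_mul_vars by force

lemma mul_vars_mmul: "mul_vars N (mmul c ` A) = mmul c ` mul_vars N A"
  unfolding mul_vars_img by (force simp: inc_mmul)

lemma mmul_monos:
  assumes "c \<in> monos_in N p" "A \<subseteq> monos_in N q"
  shows "mmul c ` A \<subseteq> monos_in N (p + q)"
  using assms by (auto simp: monos_in_def mmul_def sum.distrib)

definition pw :: "nat \<Rightarrow> nat \<Rightarrow> monomial" where
  "pw s p = (\<lambda>k. if k = s then p else 0)"

lemma pw_monos: "finite N \<Longrightarrow> s \<in> N \<Longrightarrow> pw s p \<in> monos_in N p"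
  by (auto simp: monos_in_def pw_def)

lemma mmul_pw1: "mmul (pw s 1) a = inc s a"
  by (auto simp: mmul_def pw_def inc_def fun_eq_iff)

lemma monos_single: "monos_in {t} d = {pw t d}"
  by (auto simp: monos_in_def pw_def fun_eq_iff split: if_splits)

lemma card_monos:
  assumes "finite N" "card N = Suc m"
  shows "card (monos_in N d) = (d + m) choose m"
  using assms
proof (induction m arbitrary: N d)
  case 0
  then obtain t where "N = {t}" using card_1_singletonE by auto
  then show ?case by (simp add: monos_single)
next
  case (Suc m')
  obtain t where t: "t \<in> N" using Suc.prems by fastforce
  define N' where "N' = N - {t}"
  have N': "finite N'" "card N' = Suc m'" using Suc.prems t unfolding N'_def by auto
  note IHm = Suc.IH
  show ?case
  proof (induction d)
    case 0
    have "monos_in N 0 = {w \<in> monos_in N 0. w t = 0}"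
      using monos_in_le[OF Suc.prems(1), of _ 0 t] by auto
    then have "card (monos_in N 0) = card (monos_in N' 0)"
      using monos_F0[OF Suc.prems(1) t] N'_def by simp
    then show ?case using IHm[OF N'] by simp
  next
    case (Suc d')
    let ?d = "Suc d'"
    have split: "monos_in N ?d = {w \<in> monos_in N ?d. w t = 0} \<union> {w \<in> monos_in N ?d. 0 < w t}" by auto
    have pos: "{w \<in> monos_in N ?d. 0 < w t} = inc t ` monos_in N d'"
    proof
      show "{w \<in> monos_in N ?d. 0 < w t} \<subseteq> inc t ` monos_in N d'"
      proof
        fix w assume w: "w \<in> {w \<in> monos_in N ?d. 0 < w t}"
        then have "dec t w \<in> monos_in N d'" using dec_monos[OF \<open>finite N\<close>, of w t ?d] by simp
        then show "w \<in> inc t ` monos_in N d'" using inc_dec[of w t] w by force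
      qed
      show "inc t ` monos_in N d' \<subseteq> {w \<in> monos_in N ?d. 0 < w t}"
        using inc_monos[OF \<open>finite N\<close> t] by (auto simp: inc_def)
    qed
    have c1: "card {w \<in> monos_in N ?d. w t = 0} = (?d + m') choose m'"
      using monos_F0[OF \<open>finite N\<close> t] IHm[OF N'] N'_def by simp
    have c2: "card {w \<in> monos_in N ?d. 0 < w t} = (d' + Suc m') choose Suc m'"
      using pos Suc.IH card_image[of "inc t" "monos_in N d'"] by (simp add: inj_on_def inc_inj)
    have "card (monos_in N ?d) = card {w \<in> monos_in N ?d. w t = 0} + card {w \<in> monos_in N ?d. 0 < w t}"
      by (subst split, rule card_Un_disjoint) (auto intro: finite_subset[OF _ finite_monos[OF \<open>finite N\<close>]])
    also have "\<dots> = (?d + Suc m') choose Suc m'"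
      using c1 c2 by (simp add: binomial_Suc_Suc)
    finally show ?case .
  qed
qed




lemma sum_initial:
  fixes S :: "nat set"
  assumes "finite S"
  shows "\<Sum>{0..<card S} \<le> \<Sum>S \<and> (\<Sum>{0..<card S} = \<Sum>S \<longrightarrow> S = {0..<card S})"
  using assms
proof (induction "card S" arbitrary: S)
  case 0 then show ?case by simp
next
  case (Suc n S)
  have cS: "card S = Suc n" using Suc.hyps(2) by simp
  then have ne: "S \<noteq> {}" by auto
  define \<mu> where "\<mu> = Max S"
  have mu: "\<mu> \<in> S" using Suc.prems ne unfolding \<mu>_def by simp
  define S' where "S' = S - {\<mu>}"
  have cS': "card S' = n" using cS mu Suc.prems unfolding S'_def by simp
  have fS': "finite S'" using Suc.prems unfolding S'_def by simp
  have IH: "\<Sum>{0..<n} \<le> \<Sum>S' \<and> (\<Sum>{0..<n} = \<Sum>S' \<longrightarrow> S' = {0..<n})"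
    using Suc.hyps(1)[OF cS'[symmetric] fS'] cS' by simp
  have "S \<subseteq> {0..\<mu>}" using Suc.prems unfolding \<mu>_def by auto
  then have "card S \<le> card {0..\<mu>}" by (intro card_mono) auto
  then have mun: "n \<le> \<mu>" using cS by simp
  have sS: "\<Sum>S = \<Sum>S' + \<mu>" using Suc.prems mu unfolding S'_def by (simp add: sum.remove)
  have s0: "\<Sum>{0..<Suc n} = \<Sum>{0..<n} + n" by simp
  have le: "\<Sum>{0..<Suc n} \<le> \<Sum>S" using IH sS s0 mun by linarith
  have eq: "S = {0..<Suc n}" if h: "\<Sum>{0..<Suc n} = \<Sum>S"
  proof -
    have e1: "\<Sum>{0..<n} = \<Sum>S'" using h IH sS s0 mun by linarith
    have e2: "\<mu> = n" using h IH sS s0 mun by linarith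
    have "S' = {0..<n}" using IH e1 by blast
    then have "S = insert \<mu> {0..<n}" using mu unfolding S'_def by blast
    then show ?thesis using e2 by auto
  qed
  show ?case unfolding cS using le eq by blast
qed

locale cmp =
  fixes N :: "nat set" and t j :: nat
  assumes fin: "finite N" and tN: "t \<in> N" and jN: "j \<in> N" and jt: "j \<noteq> t"
begin

definition base :: "monomial \<Rightarrow> monomial" where
  "base x = x(j := 0, t := 0)"

definition T :: "monomial set \<Rightarrow> monomial \<Rightarrow> nat set" where
  "T X B = (\<lambda>x. x t) ` {x \<in> X. base x = B}"

definition comp :: "nat \<Rightarrow> monomial set \<Rightarrow> monomial set" where
  "comp d X = {w \<in> monos_in N d. w t < card (T X (base w))}"

lemma sum_jt: "(\<Sum>k\<in>N. f k) = f j + f t + (\<Sum>k\<in>N - {j, t}. f k)"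
proof -
  have "(\<Sum>k\<in>N. f k) = f j + (\<Sum>k\<in>N - {j}. f k)" using fin jN by (simp add: sum.remove)
  also have "(\<Sum>k\<in>N - {j}. f k) = f t + (\<Sum>k\<in>N - {j} - {t}. f k)"
    using fin tN jt by (intro sum.remove) auto
  also have "N - {j} - {t} = N - {j, t}" by auto
  finally show ?thesis by (simp add: add.assoc)
qed

lemma base_eq: "base x = base y \<Longrightarrow> k \<noteq> j \<Longrightarrow> k \<noteq> t \<Longrightarrow> x k = y k"
proof -
  assume a: "base x = base y" "k \<noteq> j" "k \<noteq> t"
  have "base x k = base y k" using a(1) by simp
  then show ?thesis using a(2,3) unfolding base_def by simp
qed

lemma fib_sum:
  assumes "x \<in> monos_in N D" "y \<in> monos_in N D" "base x = base y"
  shows "x j + x t = y j + y t"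
proof -
  have "(\<Sum>k\<in>N - {j, t}. x k) = (\<Sum>k\<in>N - {j, t}. y k)"
    using base_eq[OF assms(3)] by (intro sum.cong) auto
  then show ?thesis using assms(1,2) sum_jt[of x] sum_jt[of y] by (simp add: monos_in_def)
qed

lemma fib_inj:
  assumes "x \<in> monos_in N D" "y \<in> monos_in N D" "base x = base y" "x t = y t"
  shows "x = y"
proof
  fix k
  show "x k = y k"
  proof (cases "k = j \<or> k = t")
    case True then show ?thesis using fib_sum[OF assms(1-3)] assms(4) by auto
  next
    case False then show ?thesis using base_eq[OF assms(3)] by auto
  qed
qed

lemma fib_gsum:
  assumes "X \<subseteq> monos_in N D" "finite Bs" "base ` X \<subseteq> Bs"
  shows "(\<Sum>x\<in>X. g (x t)) = (\<Sum>B\<in>Bs. \<Sum>\<tau>\<in>T X B. g \<tau>)"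
proof -
  have fX: "finite X" using assms(1) finite_monos[OF fin] finite_subset by blast
  have "(\<Sum>x\<in>X. g (x t)) = (\<Sum>B\<in>Bs. \<Sum>x\<in>{x. x \<in> X \<and> base x = B}. g (x t))"
    using sum.group[OF fX assms(2,3), of "\<lambda>x. g (x t)"] by simp
  also have "\<dots> = (\<Sum>B\<in>Bs. \<Sum>\<tau>\<in>T X B. g \<tau>)"
  proof (intro sum.cong refl)
    fix B
    have "inj_on (\<lambda>x. x t) {x \<in> X. base x = B}"
    proof (rule inj_onI)
      fix x y assume "x \<in> {x \<in> X. base x = B}" "y \<in> {x \<in> X. base x = B}" "x t = y t"
      then show "x = y" using fib_inj[of x D y] assms(1) by auto
    qed
    then show "(\<Sum>x\<in>{x. x \<in> X \<and> base x = B}. g (x t)) = (\<Sum>\<tau>\<in>T X B. g \<tau>)"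
      unfolding T_def by (simp add: sum.reindex)
  qed
  finally show ?thesis .
qed

lemma fib_card:
  assumes "X \<subseteq> monos_in N D" "finite Bs" "base ` X \<subseteq> Bs"
  shows "card X = (\<Sum>B\<in>Bs. card (T X B))"
  using fib_gsum[OF assms, of "\<lambda>_. 1::nat"] by simp

lemma fib_pot:
  assumes "X \<subseteq> monos_in N D" "finite Bs" "base ` X \<subseteq> Bs"
  shows "(\<Sum>x\<in>X. x t) = (\<Sum>B\<in>Bs. \<Sum>(T X B))"
  using fib_gsum[OF assms, of "\<lambda>x. x"] by simp

lemma finite_T: "X \<subseteq> monos_in N D \<Longrightarrow> finite (T X B)"
proof -
  assume "X \<subseteq> monos_in N D"
  then have "finite X" using finite_monos[OF fin] finite_subset by blast
  then show ?thesis unfolding T_def by simp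
qed

lemma comp_sub: "comp d X \<subseteq> monos_in N d"
  unfolding comp_def by auto

lemma T_comp:
  assumes X: "X \<subseteq> monos_in N d"
  shows "T (comp d X) B = {0..<card (T X B)}"
proof
  show "T (comp d X) B \<subseteq> {0..<card (T X B)}"
    unfolding T_def comp_def by auto
  show "{0..<card (T X B)} \<subseteq> T (comp d X) B"
  proof
    fix \<tau> assume \<tau>: "\<tau> \<in> {0..<card (T X B)}"
    then have "T X B \<noteq> {}" by auto
    then obtain x where x: "x \<in> X" "base x = B" unfolding T_def by auto
    define s where "s = x j + x t"
    have "T X B \<subseteq> {0..s}"
    proof
      fix \<sigma> assume "\<sigma> \<in> T X B"
      then obtain y where "y \<in> X" "base y = B" "\<sigma> = y t" unfolding T_def by auto
      then have "y j + y t = s" using fib_sum[of y d x] X x unfolding s_def by auto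
      then show "\<sigma> \<in> {0..s}" using \<open>\<sigma> = y t\<close> by simp
    qed
    then have "card (T X B) \<le> Suc s" using card_mono[of "{0..s}" "T X B"] by simp
    then have \<tau>s: "\<tau> \<le> s" using \<tau> by simp
    define w where "w = x(j := s - \<tau>, t := \<tau>)"
    have bw: "base w = B" using x(2) unfolding w_def base_def by (simp add: fun_eq_iff)
    have xm: "x \<in> monos_in N d" using x X by auto
    have "w \<in> monos_in N d"
    proof -
      have supp: "w k \<noteq> 0 \<Longrightarrow> k \<in> N" for k
        using xm jN tN unfolding w_def monos_in_def by (auto split: if_splits)
      have r: "(\<Sum>k\<in>N - {j, t}. w k) = (\<Sum>k\<in>N - {j, t}. x k)"
        unfolding w_def by (intro sum.cong) auto
      have "(\<Sum>k\<in>N. w k) = (\<Sum>k\<in>N. x k)"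
        using sum_jt[of w] sum_jt[of x] r \<tau>s jt unfolding w_def s_def by simp
      then show ?thesis using xm supp unfolding monos_in_def by auto
    qed
    moreover have "w t = \<tau>" unfolding w_def by simp
    ultimately have "w \<in> comp d X" using bw \<tau> unfolding comp_def by simp
    then show "\<tau> \<in> T (comp d X) B" using bw \<open>w t = \<tau>\<close> unfolding T_def by force
  qed
qed

lemma card_comp:
  assumes X: "X \<subseteq> monos_in N d"
  shows "card (comp d X) = card X"
proof -
  let ?Bs = "base ` monos_in N d"
  have fB: "finite ?Bs" using finite_monos[OF fin] by simp
  have "card (comp d X) = (\<Sum>B\<in>?Bs. card (T (comp d X) B))"
    using comp_sub by (intro fib_card[OF _ fB]) auto
  also have "\<dots> = (\<Sum>B\<in>?Bs. card (T X B))" using T_comp[OF X] by simp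
  also have "\<dots> = card X" using X by (intro fib_card[symmetric, OF X fB]) auto
  finally show ?thesis .
qed

lemma base_inc: "base (inc k x) = (if k = j \<or> k = t then base x else inc k (base x))"
  unfolding base_def inc_def by (auto simp: fun_eq_iff)

lemma inc_t: "inc k x t = (if k = t then Suc (x t) else x t)"
  unfolding inc_def by simp

lemma T_M_sub:
  assumes "k \<in> N" "base (inc k x) = B" "x \<in> X" "k \<noteq> t"
  shows "T X (base x) \<subseteq> T (mul_vars N X) B"
proof
  fix \<tau> assume "\<tau> \<in> T X (base x)"
  then obtain x' where x': "x' \<in> X" "base x' = base x" "\<tau> = x' t" unfolding T_def by auto
  have "base (inc k x') = base (inc k x)" using x'(2) by (simp add: base_inc)
  then have "base (inc k x') = B" using assms(2) by simp
  moreover have "inc k x' t = \<tau>" using x'(3) assms(4) by (simp add: inc_t)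
  moreover have "inc k x' \<in> mul_vars N X" using x' assms(1) unfolding mem_mul_vars by blast
  ultimately show "\<tau> \<in> T (mul_vars N X) B"
    unfolding T_def by (intro image_eqI[of _ _ "inc k x'"]) auto
qed

lemma T_Mcomp:
  assumes X: "X \<subseteq> monos_in N d"
  shows "T (mul_vars N (comp d X)) B \<subseteq> {0..<card (T (mul_vars N X) B)}"
proof
  fix \<tau> assume "\<tau> \<in> T (mul_vars N (comp d X)) B"
  then obtain y where y: "y \<in> mul_vars N (comp d X)" "base y = B" "\<tau> = y t" unfolding T_def by auto
  then obtain k x where kx: "k \<in> N" "x \<in> comp d X" "y = inc k x" by (auto simp: mem_mul_vars)
  have xl: "x t < card (T X (base x))" using kx(2) unfolding comp_def by simp
  have MX: "mul_vars N X \<subseteq> monos_in N (Suc d)" using X fin by (intro mul_vars_monos) auto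
  have fM: "finite (T (mul_vars N X) B)" using finite_T[OF MX] .
  have "T X (base x) \<noteq> {}" using xl by auto
  then obtain x0 where x0: "x0 \<in> X" "base x0 = base x" unfolding T_def by auto
  show "\<tau> \<in> {0..<card (T (mul_vars N X) B)}"
  proof (cases "k = t")
    case False
    have "base (inc k x0) = base (inc k x)" using x0(2) by (simp add: base_inc)
    then have "base (inc k x0) = B" using kx y by simp
    then have "T X (base x0) \<subseteq> T (mul_vars N X) B" using T_M_sub[OF kx(1) _ x0(1) False] by simp
    then have "card (T X (base x)) \<le> card (T (mul_vars N X) B)" using x0 fM by (simp add: card_mono)
    moreover have "\<tau> = x t" using y kx False by (simp add: inc_t)
    ultimately show ?thesis using xl by simp
  next
    case True
    have bx: "base x = B" using y kx True by (simp add: base_inc)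
    have s1: "T X B \<subseteq> T (mul_vars N X) B"
      using T_M_sub[OF jN _ x0(1) jt] x0 bx by (simp add: base_inc)
    have s2: "Suc ` T X B \<subseteq> T (mul_vars N X) B"
    proof
      fix \<sigma> assume "\<sigma> \<in> Suc ` T X B"
      then obtain x' where x': "x' \<in> X" "base x' = B" "\<sigma> = Suc (x' t)" unfolding T_def by auto
      have "inc t x' \<in> mul_vars N X" using x' tN by (auto simp: mem_mul_vars)
      moreover have "base (inc t x') = B" using x' by (simp add: base_inc)
      ultimately show "\<sigma> \<in> T (mul_vars N X) B" using x' unfolding T_def
        by (intro image_eqI[of _ _ "inc t x'"]) (auto simp: inc_t)
    qed
    have fT: "finite (T X B)" using finite_T[OF X] .
    have ne: "T X B \<noteq> {}" using xl bx by auto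
    define \<mu> where "\<mu> = Max (T X B)"
    have "Suc \<mu> \<notin> T X B" using fT ne unfolding \<mu>_def using Max_ge Suc_n_not_le_n by blast
    moreover have "\<mu> \<in> T X B" using fT ne unfolding \<mu>_def by simp
    ultimately have "insert (Suc \<mu>) (T X B) \<subseteq> T (mul_vars N X) B" "card (insert (Suc \<mu>) (T X B)) = Suc (card (T X B))"
      using s1 s2 fT by auto
    then have "Suc (card (T X B)) \<le> card (T (mul_vars N X) B)" using fM by (metis card_mono)
    moreover have "\<tau> = Suc (x t)" using y kx True by (simp add: inc_t)
    ultimately show ?thesis using xl bx by simp
  qed
qed

lemma card_Mcomp:
  assumes X: "X \<subseteq> monos_in N d"
  shows "card (mul_vars N (comp d X)) \<le> card (mul_vars N X)"
proof -
  let ?Bs = "base ` monos_in N (Suc d)"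
  have fB: "finite ?Bs" using finite_monos[OF fin] by simp
  have M1: "mul_vars N (comp d X) \<subseteq> monos_in N (Suc d)" using comp_sub fin by (intro mul_vars_monos) auto
  have M2: "mul_vars N X \<subseteq> monos_in N (Suc d)" using X fin by (intro mul_vars_monos) auto
  have "card (mul_vars N (comp d X)) = (\<Sum>B\<in>?Bs. card (T (mul_vars N (comp d X)) B))"
    using M1 by (intro fib_card[OF M1 fB]) auto
  also have "\<dots> \<le> (\<Sum>B\<in>?Bs. card (T (mul_vars N X) B))"
  proof (intro sum_mono)
    fix B
    show "card (T (mul_vars N (comp d X)) B) \<le> card (T (mul_vars N X) B)"
      using card_mono[OF _ T_Mcomp[OF X, of B]] by simp
  qed
  also have "\<dots> = card (mul_vars N X)" using M2 by (intro fib_card[symmetric, OF M2 fB]) auto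
  finally show ?thesis .
qed

lemma pot_comp:
  assumes X: "X \<subseteq> monos_in N d" and w: "w \<in> X" "0 < w t" "inc j (dec t w) \<notin> X"
  shows "(\<Sum>x\<in>comp d X. x t) < (\<Sum>x\<in>X. x t)"
proof -
  let ?Bs = "base ` monos_in N d"
  have fB: "finite ?Bs" using finite_monos[OF fin] by simp
  have "(\<Sum>x\<in>comp d X. x t) = (\<Sum>B\<in>?Bs. \<Sum>(T (comp d X) B))"
    using comp_sub by (intro fib_pot[OF comp_sub fB]) auto
  also have "\<dots> = (\<Sum>B\<in>?Bs. \<Sum>{0..<card (T X B)})" using T_comp[OF X] by simp
  also have "\<dots> < (\<Sum>B\<in>?Bs. \<Sum>(T X B))"
  proof (rule sum_strict_mono_ex1[OF fB])
    show "\<forall>B\<in>?Bs. \<Sum>{0..<card (T X B)} \<le> \<Sum>(T X B)"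
    proof
      fix B show "\<Sum>{0..<card (T X B)} \<le> \<Sum>(T X B)"
        using sum_initial[OF finite_T[OF X, of B]] by (rule conjunct1)
    qed
    have wm: "w \<in> monos_in N d" using w X by auto
    have ne: "T X (base w) \<noteq> {0..<card (T X (base w))}"
    proof
      assume eq0: "T X (base w) = {0..<card (T X (base w))}"
      obtain c where c: "c = card (T X (base w))" by simp
      have eq: "T X (base w) = {0..<c}" using eq0 c by simp
      have "w t \<in> T X (base w)" using w unfolding T_def by auto
      then have "w t - 1 \<in> T X (base w)" unfolding eq by simp
      then obtain x where x: "x \<in> X" "base x = base w" "x t = w t - 1" unfolding T_def by auto
      define z where "z = inc j (dec t w)"
      have dm: "dec t w \<in> monos_in N (d - 1)" "0 < d" using dec_monos[OF fin w(2) wm] by auto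
      have zm: "z \<in> monos_in N d" using inc_monos[OF fin jN dm(1)] dm(2) unfolding z_def by simp
      have bz: "base z = base w" unfolding z_def base_def inc_def dec_def using jt by (auto simp: fun_eq_iff)
      have tz: "z t = w t - 1" unfolding z_def inc_def dec_def using jt by simp
      have "x = z" using fib_inj[of x d z] x X zm bz tz by auto
      then show False using x(1) w(3) z_def by simp
    qed
    have si: "\<Sum>{0..<card (T X (base w))} \<le> \<Sum>(T X (base w)) \<and>
      (\<Sum>{0..<card (T X (base w))} = \<Sum>(T X (base w)) \<longrightarrow> T X (base w) = {0..<card (T X (base w))})"
      by (rule sum_initial[OF finite_T[OF X, of "base w"]])
    then have "\<Sum>{0..<card (T X (base w))} \<noteq> \<Sum>(T X (base w))"
      using ne by blast
    then have "\<Sum>{0..<card (T X (base w))} < \<Sum>(T X (base w))"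
      using si by linarith
    moreover have "base w \<in> ?Bs" using wm by simp
    ultimately show "\<exists>B\<in>?Bs. \<Sum>{0..<card (T X B)} < \<Sum>(T X B)" by blast
  qed
  also have "\<dots> = (\<Sum>x\<in>X. x t)" using X by (intro fib_pot[symmetric, OF X fB]) auto
  finally show ?thesis .
qed

end

definition stable :: "nat set \<Rightarrow> nat \<Rightarrow> monomial set \<Rightarrow> bool" where
  "stable N t W \<longleftrightarrow> (\<forall>w\<in>W. 0 < w t \<longrightarrow> (\<forall>j\<in>N. j \<noteq> t \<longrightarrow> inc j (dec t w) \<in> W))"

lemma stabilize:
  assumes "finite N" "t \<in> N"
  shows "W \<subseteq> monos_in N d \<Longrightarrow> \<exists>W'. W' \<subseteq> monos_in N d \<and> card W' = card W
           \<and> card (mul_vars N W') \<le> card (mul_vars N W) \<and> stable N t W'"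
proof (induction W rule: measure_induct_rule[where f = "\<lambda>W. \<Sum>w\<in>W. w t"])
  case (less W)
  show ?case
  proof (cases "stable N t W")
    case True then show ?thesis using less.prems by blast
  next
    case False
    then obtain w j where wj: "w \<in> W" "0 < w t" "j \<in> N" "j \<noteq> t" "inc j (dec t w) \<notin> W"
      unfolding stable_def by blast
    interpret c: cmp N t j using assms wj by unfold_locales auto
    let ?W1 = "c.comp d W"
    have lt: "(\<Sum>x\<in>?W1. x t) < (\<Sum>x\<in>W. x t)" using c.pot_comp[OF less.prems wj(1,2,5)] .
    obtain W' where W': "W' \<subseteq> monos_in N d" "card W' = card ?W1"
        "card (mul_vars N W') \<le> card (mul_vars N ?W1)" "stable N t W'"
      using less.IH[OF lt c.comp_sub] by blast
    show ?thesis
      using W' c.card_comp[OF less.prems] c.card_Mcomp[OF less.prems] by (intro exI[of _ W']) auto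
  qed
qed




lemma card_mul_vars_le: "finite N \<Longrightarrow> finite V \<Longrightarrow> card (mul_vars N V) \<le> card N * card V"
proof -
  assume "finite N" "finite V"
  have "card (mul_vars N V) \<le> card (N \<times> V)"
    unfolding mul_vars_img by (rule card_image_le) (use \<open>finite N\<close> \<open>finite V\<close> in simp)
  then show ?thesis by (simp add: card_cartesian_product)
qed

lemma inc_image_card: "card (inc s ` A) = card A"
  by (rule card_image) (simp add: inj_on_def inc_inj)

lemma realizer:
  assumes "finite N" "card N = Suc m" "h \<le> card (monos_in N d)"
  shows "\<exists>W. W \<subseteq> monos_in N d \<and> card W = h \<and> card (mul_vars N W) \<le> mf m h"
  using assms
proof (induction m arbitrary: N d h)
  case 0
  then obtain t where Nt: "N = {t}" using card_1_singletonE by auto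
  have M: "monos_in N d = {pw t d}" using Nt monos_single by simp
  then have h1: "h \<le> 1" using "0.prems" by simp
  show ?case
  proof (cases "h = 0")
    case True then show ?thesis by (intro exI[of _ "{}"]) simp
  next
    case False
    then have h: "h = 1" using h1 by simp
    have "card (mul_vars N {pw t d}) \<le> card N * card {pw t d}"
      by (rule card_mul_vars_le) (use Nt in auto)
    then show ?thesis using h M Nt by (intro exI[of _ "monos_in N d"]) simp
  qed
next
  case (Suc m')
  let ?m = "Suc m'"
  have cM: "card (monos_in N d) = (d + ?m) choose ?m" using card_monos Suc.prems by blast
  show ?case
  proof (cases "h = 0")
    case True then show ?thesis by (intro exI[of _ "{}"]) simp
  next
    case False
    then obtain k r where kr: "?m \<le> k" "r < k choose m'" "h = (k choose ?m) + r"
      using mf_decomp[of ?m h] by auto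
    have mfh: "mf ?m h = (Suc k choose ?m) + mf m' r" using mf_eq[of ?m k r] kr by simp
    have kd: "k \<le> d + ?m"
    proof (rule ccontr)
      assume "\<not> k \<le> d + ?m"
      then have "Suc (d + ?m) \<le> k" by simp
      then have "Suc (d + ?m) choose ?m \<le> k choose ?m" by (rule binomial_right_mono)
      moreover have "Suc (d + ?m) choose ?m = ((d + ?m) choose m') + ((d + ?m) choose ?m)"
        by (simp add: binomial_Suc_Suc)
      moreover have "0 < (d + ?m) choose m'" by (intro zero_less_binomial) simp
      ultimately show False using Suc.prems(3) cM kr by linarith
    qed
    define e where "e = k - ?m"
    have ke: "k = e + ?m" using kr e_def by simp
    show ?thesis
    proof (cases "e = d")
      case True
      have r0: "r = 0" using Suc.prems(3) cM kr ke True by simp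
      have Nne: "N \<noteq> {}" using Suc.prems by auto
      have "card (mul_vars N (monos_in N d)) = (Suc d + ?m) choose ?m"
        using mul_vars_all[OF Suc.prems(1) Nne] card_monos[OF Suc.prems(1,2)] by simp
      moreover have "card (monos_in N d) = h" using cM kr ke True r0 by simp
      moreover have "mf ?m h = (Suc d + ?m) choose ?m" using mfh r0 ke True by simp
      ultimately show ?thesis by (intro exI[of _ "monos_in N d"]) simp
    next
      case False
      then have ed: "e < d" using kd ke by simp
      obtain s where s: "s \<in> N" using Suc.prems by fastforce
      define N' where "N' = N - {s}"
      have N': "finite N'" "card N' = Suc m'" "N = insert s N'" "s \<notin> N'"
        using Suc.prems s unfolding N'_def by auto
      define A where "A = monos_in N e"
      have cA: "card A = k choose ?m" using card_monos[OF Suc.prems(1,2)] ke unfolding A_def by simp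
      have "card (monos_in N' (Suc e)) = k choose m'" using card_monos[OF N'(1,2)] ke by simp
      then obtain B where B: "B \<subseteq> monos_in N' (Suc e)" "card B = r" "card (mul_vars N' B) \<le> mf m' r"
        using Suc.IH[OF N'(1,2), of r "Suc e"] kr by auto
      have BN: "B \<subseteq> monos_in N (Suc e)" using B(1) monos_in_mono[OF Suc.prems(1), of N'] N'_def by blast
      have MA: "mul_vars N A = monos_in N (Suc e)" unfolding A_def
        using mul_vars_all[OF Suc.prems(1)] s by blast
      define W0 where "W0 = inc s ` A \<union> B"
      have fA: "finite A" unfolding A_def using finite_monos[OF Suc.prems(1)] .
      have fB: "finite B" using B(1) finite_monos[OF N'(1)] finite_subset by blast
      have disj: "inc s ` A \<inter> B = {}"
      proof -
        have "b s = 0" if "b \<in> B" for b using that B(1) N'(4) monos_in_supp by blast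
        moreover have "0 < (inc s a) s" for a by (simp add: inc_def)
        ultimately show ?thesis by (metis (no_types, lifting) disjoint_iff imageE less_irrefl)
      qed
      have cW0: "card W0 = h"
        unfolding W0_def using card_Un_disjoint[of "inc s ` A" B] fA fB disj inc_image_card[of s A] cA B(2) kr
        by simp
      have W0m: "W0 \<subseteq> monos_in N (Suc e)"
        unfolding W0_def A_def using BN inc_monos[OF Suc.prems(1) s] by auto
      have MW0: "mul_vars N W0 \<subseteq> inc s ` mul_vars N A \<union> mul_vars N' B"
      proof
        fix y assume "y \<in> mul_vars N W0"
        then obtain i v where iv: "i \<in> N" "v \<in> W0" "y = inc i v" by (auto simp: mem_mul_vars)
        show "y \<in> inc s ` mul_vars N A \<union> mul_vars N' B"
        proof (cases "v \<in> B")
          case True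
          show ?thesis
          proof (cases "i = s")
            case True
            have "v \<in> mul_vars N A" using MA BN \<open>v \<in> B\<close> by auto
            then show ?thesis using iv True by auto
          next
            case False
            then have "i \<in> N'" using iv N'_def by simp
            then have "y \<in> mul_vars N' B" using iv \<open>v \<in> B\<close> unfolding mem_mul_vars by blast
            then show ?thesis by blast
          qed
        next
          case False
          then obtain a where a: "a \<in> A" "v = inc s a" using iv W0_def by auto
          have "inc i a \<in> mul_vars N A" using a iv unfolding mem_mul_vars by blast
          moreover have "y = inc s (inc i a)" using iv a inc_comm by simp
          ultimately show ?thesis by blast
        qed
      qed
      have "card (mul_vars N W0) \<le> card (inc s ` mul_vars N A \<union> mul_vars N' B)"
        using MW0 finite_mul_vars[OF Suc.prems(1) fA] finite_mul_vars[OF N'(1) fB]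
        by (intro card_mono) auto
      also have "\<dots> \<le> card (inc s ` mul_vars N A) + card (mul_vars N' B)" by (rule card_Un_le)
      also have "\<dots> \<le> (Suc e + ?m choose ?m) + mf m' r"
        using inc_image_card[of s "mul_vars N A"] MA card_monos[OF Suc.prems(1,2)] B(3) by simp
      also have "\<dots> = mf ?m h" using mfh ke by simp
      finally have cMW0: "card (mul_vars N W0) \<le> mf ?m h" .
      define c where "c = pw s (d - Suc e)"
      have cm: "c \<in> monos_in N (d - Suc e)" unfolding c_def by (rule pw_monos[OF Suc.prems(1) s])
      have "mmul c ` W0 \<subseteq> monos_in N (d - Suc e + Suc e)" by (rule mmul_monos[OF cm W0m])
      then have Wm: "mmul c ` W0 \<subseteq> monos_in N d" using ed by simp
      show ?thesis
        using Wm cW0 cMW0 card_mmul[of c W0] card_mmul[of c "mul_vars N W0"] mul_vars_mmul[of N c W0]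
        by (intro exI[of _ "mmul c ` W0"]) simp
    qed
  qed
qed

lemma SA_of:
  assumes mac: "\<And>N d W. finite N \<Longrightarrow> card N = Suc j \<Longrightarrow> W \<subseteq> monos_in N d \<Longrightarrow> mf j (card W) \<le> card (mul_vars N W)"
  shows "SA j"
proof (cases j)
  case 0 then show ?thesis by (simp add: SA_0)
next
  case (Suc j')
  show ?thesis unfolding SA_def
  proof (intro allI)
    fix x y :: nat
    define N :: "nat set" where "N = {0..j}"
    have N: "finite N" "card N = Suc j" "0 \<in> N" "1 \<in> N" using Suc unfolding N_def by auto
    define d where "d = x + y"
    have cm: "card (monos_in N d) = (d + j) choose j" using card_monos[OF N(1,2)] .
    have "Suc d \<le> (d + j) choose j" using choose_ge_s[of j d] Suc by simp
    then have xy: "x \<le> card (monos_in N d)" "y \<le> card (monos_in N d)" using cm d_def by auto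
    obtain A where A: "A \<subseteq> monos_in N d" "card A = x" "card (mul_vars N A) \<le> mf j x"
      using realizer[OF N(1,2) xy(1)] by blast
    obtain B where B: "B \<subseteq> monos_in N d" "card B = y" "card (mul_vars N B) \<le> mf j y"
      using realizer[OF N(1,2) xy(2)] by blast
    define A1 where "A1 = mmul (pw 0 (Suc d)) ` A"
    define B1 where "B1 = mmul (pw 1 (Suc d)) ` B"
    have A1m: "A1 \<subseteq> monos_in N (Suc d + d)" unfolding A1_def by (rule mmul_monos[OF pw_monos[OF N(1,3)] A(1)])
    have B1m: "B1 \<subseteq> monos_in N (Suc d + d)" unfolding B1_def by (rule mmul_monos[OF pw_monos[OF N(1,4)] B(1)])
    have fA: "finite A" "finite B" using A(1) B(1) finite_monos[OF N(1)] finite_subset by blast+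
    have disj: "A1 \<inter> B1 = {}"
    proof -
      have "Suc d \<le> a 0" if "a \<in> A1" for a using that unfolding A1_def by (auto simp: mmul_def pw_def)
      moreover have "b 0 \<le> d" if bB: "b \<in> B1" for b
      proof -
        obtain b' where "b' \<in> B" "b = mmul (pw 1 (Suc d)) b'" using bB B1_def by auto
        then show ?thesis using monos_in_le[OF N(1), of b' d 0] B(1) by (auto simp: mmul_def pw_def)
      qed
      ultimately show ?thesis by (meson disjoint_iff not_less_eq_eq)
    qed
    have cU: "card (A1 \<union> B1) = x + y"
      using card_Un_disjoint[of A1 B1] disj fA A(2) B(2) card_mmul unfolding A1_def B1_def by simp
    have "mf j (x + y) \<le> card (mul_vars N (A1 \<union> B1))"
      using mac[OF N(1,2), of "A1 \<union> B1"] A1m B1m cU by simp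
    also have "\<dots> \<le> card (mul_vars N A1) + card (mul_vars N B1)"
      unfolding mul_vars_Un by (rule card_Un_le)
    also have "\<dots> = card (mul_vars N A) + card (mul_vars N B)"
      unfolding A1_def B1_def mul_vars_mmul card_mmul ..
    also have "\<dots> \<le> mf j x + mf j y" using A(3) B(3) by simp
    finally show "mf j (x + y) \<le> mf j x + mf j y" .
  qed
qed

lemma macaulay:
  "finite N \<Longrightarrow> card N = Suc m \<Longrightarrow> W \<subseteq> monos_in N d \<Longrightarrow> mf m (card W) \<le> card (mul_vars N W)"
proof (induction m arbitrary: N d W rule: less_induct)
  case (less m)
  show ?case
  proof (cases m)
    case 0
    then obtain t where Nt: "N = {t}" using less.prems card_1_singletonE by auto
    have "mul_vars N W = inc t ` W" using Nt by (simp add: mul_vars_insert)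
    then show ?thesis using 0 inc_image_card by simp
  next
    case (Suc m')
    have SAs: "\<forall>j. j + 2 \<le> m \<longrightarrow> SA j"
    proof (intro allI impI)
      fix j assume "j + 2 \<le> m"
      then have "j < m" by simp
      then show "SA j" using less.IH by (intro SA_of) blast
    qed
    obtain t where t: "t \<in> N" using less.prems by fastforce
    define N' where "N' = N - {t}"
    have N': "finite N'" "card N' = Suc m'" using less.prems t Suc unfolding N'_def by auto
    have macN': "mf m' (card F) \<le> card (mul_vars N' F)" if "F \<subseteq> monos_in N' e" for F e
      using less.IH[of m' N' F e] Suc N' that by simp
    show ?thesis
      using less.prems(3)
    proof (induction d arbitrary: W rule: less_induct)
      case (less d W)
      obtain S where S: "S \<subseteq> monos_in N d" "card S = card W"
          "card (mul_vars N S) \<le> card (mul_vars N W)" "stable N t S"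
        using stabilize[OF \<open>finite N\<close> t less.prems] by blast
      have fS: "finite S" using S(1) finite_monos[OF \<open>finite N\<close>] finite_subset by blast
      define F0 where "F0 = {w \<in> S. w t = 0}"
      define P where "P = {w \<in> S. 0 < w t}"
      define Wp where "Wp = dec t ` P"
      have F0m: "F0 \<subseteq> monos_in N' d"
      proof
        fix w assume "w \<in> F0"
        then have "w \<in> {w \<in> monos_in N d. w t = 0}" using S(1) unfolding F0_def by auto
        then show "w \<in> monos_in N' d" using monos_F0[OF \<open>finite N\<close> t, of d] unfolding N'_def by simp
      qed
      have SU: "S = F0 \<union> P" unfolding F0_def P_def by auto
      have cS: "card S = card F0 + card P"
      proof -
        have "card (F0 \<union> P) = card F0 + card P"
          by (rule card_Un_disjoint) (use fS in \<open>auto simp: F0_def P_def\<close>)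
        then show ?thesis using SU by simp
      qed
      have cWp: "card Wp = card P"
        unfolding Wp_def P_def
      proof (rule card_image, rule inj_onI)
        fix v w assume "v \<in> {w \<in> S. 0 < w t}" "w \<in> {w \<in> S. 0 < w t}" "dec t v = dec t w"
        then have "inc t (dec t v) = inc t (dec t w)" by simp
        then show "v = w" using inc_dec[of v t] inc_dec[of w t] \<open>v \<in> {w \<in> S. 0 < w t}\<close> \<open>w \<in> {w \<in> S. 0 < w t}\<close> by simp
      qed
      have b: "mf m (card Wp) \<le> card F0 + card Wp"
      proof (cases "P = {}")
        case True then show ?thesis unfolding Wp_def by simp
      next
        case False
        then obtain w where w: "w \<in> S" "0 < w t" unfolding P_def by auto
        then have d0: "0 < d" using dec_monos[OF \<open>finite N\<close>, of w t, OF w(2)] S(1) by blast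
        have Wpm: "Wp \<subseteq> monos_in N (d - 1)"
        proof
          fix z assume "z \<in> Wp"
          then obtain v where v: "v \<in> S" "0 < v t" "z = dec t v" unfolding Wp_def P_def by auto
          have "v \<in> monos_in N d" using v(1) S(1) by auto
          then show "z \<in> monos_in N (d - 1)" using dec_monos[OF \<open>finite N\<close>, of v t, OF v(2)] v(3) by auto
        qed
        have "mf m (card Wp) \<le> card (mul_vars N Wp)" using less.IH[of "d - 1" Wp] d0 Wpm by simp
        also have "\<dots> \<le> card S"
        proof (rule card_mono[OF fS])
          show "mul_vars N Wp \<subseteq> S"
          proof
            fix y assume "y \<in> mul_vars N Wp"
            then obtain i v where iv: "i \<in> N" "v \<in> P" "y = inc i (dec t v)"
              unfolding mem_mul_vars Wp_def by blast
            show "y \<in> S"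
            proof (cases "i = t")
              case True then show ?thesis using iv inc_dec[of v t] unfolding P_def by auto
            next
              case False then show ?thesis using iv S(4) unfolding stable_def P_def by blast
            qed
          qed
        qed
        finally show ?thesis using cS cWp by simp
      qed
      have L: "mf m (card F0 + card Wp) \<le> mf m' (card F0) + card F0 + card Wp"
        using mf_L[of m "card Wp" "card F0"] Suc SAs b by simp
      have disj: "mul_vars N' F0 \<inter> inc t ` S = {}"
      proof -
        have "y t = 0" if "y \<in> mul_vars N' F0" for y
          using that unfolding mem_mul_vars F0_def N'_def by (auto simp: inc_def split: if_splits)
        moreover have "0 < y t" if "y \<in> inc t ` S" for y using that by (auto simp: inc_def)
        ultimately show ?thesis by (metis disjoint_iff less_irrefl)
      qed
      have sub1: "mul_vars N' F0 \<subseteq> mul_vars N S"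
        by (rule mul_vars_mono) (auto simp: F0_def N'_def)
      have sub2: "inc t ` S \<subseteq> mul_vars N S"
      proof
        fix z assume "z \<in> inc t ` S"
        then obtain v where "v \<in> S" "z = inc t v" by auto
        then show "z \<in> mul_vars N S" using t unfolding mem_mul_vars by blast
      qed
      have sub: "mul_vars N' F0 \<union> inc t ` S \<subseteq> mul_vars N S" using sub1 sub2 by blast
      have fF0: "finite F0" unfolding F0_def using fS by simp
      have "card (mul_vars N' F0) + card S = card (mul_vars N' F0 \<union> inc t ` S)"
        using card_Un_disjoint[OF finite_mul_vars[OF N'(1) fF0] _ disj] fS inc_image_card[of t S] by simp
      also have "\<dots> \<le> card (mul_vars N S)"
        using sub finite_mul_vars[OF \<open>finite N\<close> fS] by (rule card_mono[rotated])
      finally have "card (mul_vars N' F0) + card S \<le> card (mul_vars N S)" .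
      then show ?case using L macN'[OF F0m] cS cWp S(2,3) by simp
    qed
  qed
qed




lemma mscale_var: "mscale (var i) V = inc i ` V"
  by (auto simp: mscale_def mmul_var)

lemma mac_bin:
  assumes "finite N" "N \<noteq> {}" "W \<subseteq> monos_in N d"
  shows "bin_up (card N - 1) (card W) \<le> card (mul_vars N W)"
proof -
  have "card N = Suc (card N - 1)" using assms(1,2) by (simp add: card_gt_0_iff)
  then show ?thesis using macaulay[OF assms(1) _ assms(3)] bin_up_mf by metis
qed

theorem lemma2p1:
  fixes n d i :: nat and V :: "monomial set"
  assumes "V \<subseteq> monos_in {1..n} d" and "V \<noteq> {}"
    and "i \<in> {1..n}"
  shows "(mul_vars ({1..n} - {i}) (Dset i V)
           \<subseteq> mul_vars {1..n} V - mscale (var i) V)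
       \<and> (card (mul_vars {1..n} V)
           \<ge> bin_up (n - 1) (card (Kset i V)) + bin_up (n - 2) (card (Dset i V)))
       \<and> (card (mul_vars {1..n} V)
           = bin_up (n - 1) (card (Kset i V)) + bin_up (n - 2) (card (Dset i V))
         \<longleftrightarrow> gotzmann {1..n} (Kset i V)
             \<and> gotzmann ({1..n} - {i}) (mdiv (mgcd V) (Dset i V))
             \<and> mscale (var i) (Dset i V) \<subseteq> mul_vars ({1..n} - {i}) (Kset i V))"
proof -
  define N where "N = {1..n}"
  define Nb where "Nb = N - {i}"
  define u where "u = mgcd V"
  define K where "K = Kset i V"
  define D where "D = Dset i V"
  have fN: "finite N" "finite Nb" unfolding N_def Nb_def by auto
  have iN: "i \<in> N" using assms(3) N_def by simp
  have NI: "N = insert i Nb" using iN Nb_def by auto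
  have cN1: "card N = n" unfolding N_def by simp
  have cN: "card N = n" "card Nb = n - 1" using iN cN1 fN unfolding Nb_def by (auto simp: card_Diff_singleton)
  have Vm: "V \<subseteq> monos_in N d" using assms(1) N_def by simp
  have fV: "finite V" using Vm finite_monos[OF fN(1)] finite_subset by blast
  have ule: "u k \<le> v k" if "v \<in> V" for v k
    unfolding u_def mgcd_def using fV that by (intro Min_le) auto
  have KD: "K \<union> D = V" "K \<inter> D = {}" "K \<subseteq> V" "D \<subseteq> V"
    unfolding K_def D_def Kset_def Dset_def by auto
  have Di: "w i = u i" if "w \<in> D" for w
  proof -
    have c: "1 < card V" "w \<in> V" "\<not> mdvd (mmul (var i) (mgcd V)) w"
      using that unfolding D_def Dset_def Kset_def by (auto split: if_splits)
    then obtain k where k: "\<not> (mmul (var i) u k \<le> w k)" unfolding mdvd_def u_def by auto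
    show ?thesis
    proof (cases "k = i")
      case True then show ?thesis using k ule[OF c(2), of i] by (simp add: mmul_var inc_def)
    next
      case False then show ?thesis using k ule[OF c(2), of k] by (simp add: mmul_var inc_def)
    qed
  qed
  have Ki: "u i < v i" if "v \<in> K" "D \<noteq> {}" for v
  proof -
    have "1 < card V" using that(2) unfolding D_def Dset_def by (auto split: if_splits)
    then have "mdvd (mmul (var i) u) v" using that(1) unfolding K_def Kset_def u_def by auto
    then show ?thesis unfolding mdvd_def by (metis mmul_var inc_def fun_upd_same Suc_le_eq)
  qed
  have Dn: "Nb \<noteq> {}" if "D \<noteq> {}"
  proof
    assume "Nb = {}"
    then have "N = {i}" using NI by simp
    then have "V \<subseteq> {pw i d}" using Vm monos_single by simp
    then have "card V \<le> card {pw i d}" by (intro card_mono) auto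
    then have "card V \<le> 1" by simp
    then show False using that unfolding D_def Dset_def by simp
  qed
  have fK: "finite K" "finite D" using KD fV finite_subset by blast+
  define MV where "MV = mul_vars N V"
  define MK where "MK = mul_vars N K"
  define MbD where "MbD = mul_vars Nb D"
  define xD where "xD = inc i ` D"
  have fM: "finite MK" "finite MbD" "finite xD" "finite MV"
    unfolding MK_def MbD_def xD_def MV_def using fK fN fV finite_mul_vars by auto
  have MVeq: "MV = (MK \<union> xD) \<union> MbD"
  proof -
    have "MV = MK \<union> mul_vars N D" unfolding MV_def MK_def using KD(1) mul_vars_Un by metis
    also have "mul_vars N D = xD \<union> MbD" unfolding xD_def MbD_def NI by (rule mul_vars_insert)
    finally show ?thesis by blast
  qed
  have MbD_i: "y i = u i" if yM: "y \<in> MbD" for y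
  proof -
    obtain k w where "k \<in> Nb" "w \<in> D" "y = inc k w" using yM unfolding MbD_def mem_mul_vars by blast
    then show ?thesis using Di Nb_def by (auto simp: inc_def)
  qed
  have disj: "(MK \<union> xD) \<inter> MbD = {}"
  proof (rule equals0I)
    fix y assume y: "y \<in> (MK \<union> xD) \<inter> MbD"
    then have yi: "y i = u i" using MbD_i by blast
    have Dne: "D \<noteq> {}" using y unfolding MbD_def by auto
    show False
    proof (cases "y \<in> MK")
      case True
      then obtain k v where kv: "v \<in> K" "y = inc k v" unfolding MK_def mem_mul_vars by blast
      have "v i \<le> y i" using kv by (simp add: inc_def)
      then show False using Ki[OF kv(1) Dne] yi by simp
    next
      case False
      then obtain w where "w \<in> D" "y = inc i w" using y unfolding xD_def by auto
      then show False using yi Di by (simp add: inc_def)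
    qed
  qed
  have cMV: "card MV = card (MK \<union> xD) + card MbD"
    unfolding MVeq using disj fM by (intro card_Un_disjoint) auto
  have cMK: "card MK \<le> card (MK \<union> xD)" using fM by (intro card_mono) auto
  have P1: "MbD \<subseteq> MV - inc i ` V"
  proof
    fix y assume y: "y \<in> MbD"
    have "y \<in> MV" using y MVeq by blast
    moreover have "y \<notin> inc i ` V"
    proof
      assume "y \<in> inc i ` V"
      then obtain v where "v \<in> V" "y = inc i v" by auto
      then have "u i < y i" using ule[of v i] by (simp add: inc_def)
      then show False using MbD_i[OF y] by simp
    qed
    ultimately show "y \<in> MV - inc i ` V" by simp
  qed
  define \<phi> :: "monomial \<Rightarrow> monomial" where "\<phi> y = (\<lambda>k. y k - u k)" for y
  have Du: "mdiv u D = \<phi> ` D" unfolding mdiv_def \<phi>_def by auto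
  have geD: "u k \<le> w k" if "w \<in> D" for w k using that KD ule by blast
  have inj\<phi>: "inj_on \<phi> {y. \<forall>k. u k \<le> y k}"
  proof (rule inj_onI)
    fix x y assume xy: "x \<in> {y. \<forall>k. u k \<le> y k}" "y \<in> {y. \<forall>k. u k \<le> y k}" "\<phi> x = \<phi> y"
    show "x = y"
    proof
      fix k
      have "x k - u k = y k - u k" using xy(3) unfolding \<phi>_def by metis
      moreover have "u k \<le> x k" "u k \<le> y k" using xy(1,2) by auto
      ultimately show "x k = y k" by simp
    qed
  qed
  have Dsub: "D \<subseteq> {y. \<forall>k. u k \<le> y k}" using geD by blast
  have MbDsub: "MbD \<subseteq> {y. \<forall>k. u k \<le> y k}"
  proof
    fix y assume "y \<in> MbD"
    then obtain k w where "w \<in> D" "y = inc k w" unfolding MbD_def mem_mul_vars by blast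
    then show "y \<in> {y. \<forall>k. u k \<le> y k}" using geD by (auto simp: inc_def le_SucI)
  qed
  have MDu: "mul_vars Nb (mdiv u D) = \<phi> ` MbD"
  proof -
    have "inc k (\<phi> w) = \<phi> (inc k w)" if "w \<in> D" for k w
      using geD[OF that] unfolding \<phi>_def by (auto simp: inc_def fun_eq_iff Suc_diff_le)
    then show ?thesis unfolding Du MbD_def mul_vars_img image_image
      by (auto simp: image_iff) (metis (mono_tags, lifting) SigmaI case_prod_conv)+
  qed
  have cMDu: "card (mul_vars Nb (mdiv u D)) = card MbD"
    unfolding MDu by (rule card_image) (rule inj_on_subset[OF inj\<phi> MbDsub])
  have cDu: "card (mdiv u D) = card D"
    unfolding Du by (rule card_image) (rule inj_on_subset[OF inj\<phi> Dsub])
  have Dum: "mdiv u D \<subseteq> monos_in Nb (d - (\<Sum>k\<in>N. u k))"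
  proof
    fix z assume "z \<in> mdiv u D"
    then obtain w where w: "w \<in> D" "z = \<phi> w" unfolding Du by auto
    have wm: "w \<in> monos_in N d" using w(1) KD Vm by blast
    have supp: "k \<in> Nb" if "z k \<noteq> 0" for k
    proof -
      have "w k \<noteq> 0" using that w(2) unfolding \<phi>_def by simp
      then have "k \<in> N" using wm unfolding monos_in_def by auto
      moreover have "k \<noteq> i" using that w Di unfolding \<phi>_def by auto
      ultimately show ?thesis unfolding Nb_def by simp
    qed
    have "(\<Sum>k\<in>Nb. z k) = (\<Sum>k\<in>N. z k)"
      using NI fN w Di unfolding \<phi>_def Nb_def by (simp add: sum.remove[OF fN(1) iN])
    also have "\<dots> = (\<Sum>k\<in>N. w k) - (\<Sum>k\<in>N. u k)"
      unfolding w(2) \<phi>_def using geD[OF w(1)] by (simp add: sum_subtractf_nat)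
    also have "\<dots> = d - (\<Sum>k\<in>N. u k)" using wm unfolding monos_in_def by simp
    finally show "z \<in> monos_in Nb (d - (\<Sum>k\<in>N. u k))" using supp unfolding monos_in_def by auto
  qed
  have Km: "K \<subseteq> monos_in N d" using KD Vm by blast
  have NE: "N \<noteq> {}" using iN by auto
  have bK: "bin_up (n - 1) (card K) \<le> card MK"
    using mac_bin[OF fN(1) NE Km] cN unfolding MK_def by simp
  have bD: "bin_up (n - 2) (card D) \<le> card MbD"
  proof (cases "D = {}")
    case True then show ?thesis by (simp add: bin_up_def)
  next
    case False
    have "bin_up (card Nb - 1) (card (mdiv u D)) \<le> card (mul_vars Nb (mdiv u D))"
      using mac_bin[OF fN(2) Dn[OF False] Dum] .
    then show ?thesis using cN cDu cMDu by (simp add: diff_diff_add numeral_2_eq_2)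
  qed
  have xsub: "xD \<subseteq> MK \<longleftrightarrow> xD \<subseteq> mul_vars Nb K"
  proof
    assume a: "xD \<subseteq> MK"
    show "xD \<subseteq> mul_vars Nb K"
    proof
      fix y assume y: "y \<in> xD"
      then obtain w where w: "w \<in> D" "y = inc i w" unfolding xD_def by auto
      have "y \<in> mul_vars N K" using a y unfolding MK_def by blast
      then obtain k v where kv: "k \<in> N" "v \<in> K" "y = inc k v" unfolding mem_mul_vars by blast
      have "k \<noteq> i"
      proof
        assume "k = i"
        then have "v = w" using kv w inc_inj by metis
        then show False using KD(2) kv w by blast
      qed
      then show "y \<in> mul_vars Nb K" using kv unfolding Nb_def mem_mul_vars by blast
    qed
  next
    assume "xD \<subseteq> mul_vars Nb K"
    then show "xD \<subseteq> MK" unfolding MK_def using mul_vars_mono[of K K Nb N] Nb_def by blast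
  qed
  have eqchar: "card MV = bin_up (n - 1) (card K) + bin_up (n - 2) (card D) \<longleftrightarrow>
      card MK = bin_up (n - 1) (card K) \<and> card MbD = bin_up (n - 2) (card D) \<and> xD \<subseteq> MK"
  proof
    assume e: "card MV = bin_up (n - 1) (card K) + bin_up (n - 2) (card D)"
    have c1: "card (MK \<union> xD) = card MK" using e cMV cMK bK bD by simp
    have "MK \<union> xD = MK" using card_subset_eq[of "MK \<union> xD" MK] c1 fM by auto
    then show "card MK = bin_up (n - 1) (card K) \<and> card MbD = bin_up (n - 2) (card D) \<and> xD \<subseteq> MK"
      using e cMV cMK bK bD by auto
  next
    assume a: "card MK = bin_up (n - 1) (card K) \<and> card MbD = bin_up (n - 2) (card D) \<and> xD \<subseteq> MK"
    then have "MK \<union> xD = MK" by blast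
    then show "card MV = bin_up (n - 1) (card K) + bin_up (n - 2) (card D)" using a cMV by simp
  qed
  have gK: "gotzmann N K \<longleftrightarrow> card MK = bin_up (n - 1) (card K)"
    unfolding gotzmann_def MK_def using Km cN by auto
  have gD: "gotzmann Nb (mdiv u D) \<longleftrightarrow> card MbD = bin_up (n - 2) (card D)"
    unfolding gotzmann_def using Dum cN cDu cMDu by (auto simp: diff_diff_add numeral_2_eq_2)
  show ?thesis
    using P1 cMV cMK bK bD eqchar gK gD xsub
    unfolding N_def[symmetric] Nb_def[symmetric] u_def[symmetric] K_def[symmetric] D_def[symmetric]
      MV_def[symmetric] MK_def[symmetric] MbD_def[symmetric] mscale_var xD_def[symmetric]
    by auto
qed


end
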